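(* Let $S$ be a $\Gamma$-hemiring and let $I$ be a prime h-ideal of $S$. Then for every $x\in S$ with $x\notin I$, $\langle x,\lambda_I\rangle=\lambda_I$.
   Context: A $\Gamma$-hemiring is a pair of additive commutative semigroups with zero $S$ and $\Gamma$ with a map $S\times\Gamma\times S\to S$, $(a,\alpha,b)\mapsto a\alpha b$, such that for all $a,b,c\in S$, $\alpha,\beta\in\Gamma$: $(a+b)\alpha c=a\alpha c+b\alpha c$; $a\alpha(b+c)=a\alpha b+a\alpha c$; $a(\alpha+\beta)b=a\alpha b+a\beta b$; $a\alpha(b\beta c)=(a\alpha b)\beta c$; $0\alpha a=0=a\alpha0$; $a0b=0=b0a$. An ideal of $S$ is a non-empty subset $A$ closed under addition with $s\gamma a\in A$ and $a\gamma s\in A$ for all $s\in S$, $a\in A$, $\gamma\in\Gamma$; it is an h-ideal if for all $x,z\in S$ and $a,b\in A$, $x+a+z=b+z$ implies $x\in A$. A proper h-ideal $I$ is prime if for any h-ideals $H,K$ of $S$, $H\Gamma K\subseteq I$ (where $H\Gamma K$ is the set of finite sums of elements $h\gamma k$, $h\in H$, $\gamma\in\Gamma$, $k\in K$) implies $H\subseteq I$ or $K\subseteq I$. $\lambda_I$ is the characteristic function of $I$. For a fuzzy subset $\mu:S\to[0,1]$ and $x\in S$, $\langle x,\mu\rangle(y)=\inf_{s\in S,\ \alpha,\gamma\in\Gamma}\mu(x\alpha s\gamma y)$. *)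

theory Defs
  imports Main "HOL-Library.Indicator_Function" Complex_Main
begin

text \<open>A Gamma-hemiring: S is the carrier type 'a (a commutative additive monoid,
  i.e. commutative semigroup with zero), Gamma is the type 'g, and
  m a \<alpha> b stands for a\<alpha>b.\<close>

definition gamma_hemiring :: "('a::comm_monoid_add \<Rightarrow> 'g::comm_monoid_add \<Rightarrow> 'a \<Rightarrow> 'a) \<Rightarrow> bool" where
  "gamma_hemiring m \<longleftrightarrow>
     (\<forall>a b c \<alpha>. m (a + b) \<alpha> c = m a \<alpha> c + m b \<alpha> c) \<and>
     (\<forall>a b c \<alpha>. m a \<alpha> (b + c) = m a \<alpha> b + m a \<alpha> c) \<and>
     (\<forall>a b \<alpha> \<beta>. m a (\<alpha> + \<beta>) b = m a \<alpha> b + m a \<beta> b) \<and>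
     (\<forall>a b c \<alpha> \<beta>. m a \<alpha> (m b \<beta> c) = m (m a \<alpha> b) \<beta> c) \<and>
     (\<forall>a \<alpha>. m 0 \<alpha> a = 0 \<and> m a \<alpha> 0 = 0) \<and>
     (\<forall>a b. m a 0 b = 0 \<and> m b 0 a = 0)"

definition gideal :: "('a::comm_monoid_add \<Rightarrow> 'g \<Rightarrow> 'a \<Rightarrow> 'a) \<Rightarrow> 'a set \<Rightarrow> bool" where
  "gideal m A \<longleftrightarrow> A \<noteq> {} \<and> (\<forall>a\<in>A. \<forall>b\<in>A. a + b \<in> A) \<and>
     (\<forall>s a \<gamma>. a \<in> A \<longrightarrow> m s \<gamma> a \<in> A \<and> m a \<gamma> s \<in> A)"

definition h_ideal :: "('a::comm_monoid_add \<Rightarrow> 'g \<Rightarrow> 'a \<Rightarrow> 'a) \<Rightarrow> 'a set \<Rightarrow> bool" where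
  "h_ideal m A \<longleftrightarrow> gideal m A \<and>
     (\<forall>x z. \<forall>a\<in>A. \<forall>b\<in>A. x + a + z = b + z \<longrightarrow> x \<in> A)"

inductive_set gamma_prod :: "('a::comm_monoid_add \<Rightarrow> 'g \<Rightarrow> 'a \<Rightarrow> 'a) \<Rightarrow> 'a set \<Rightarrow> 'a set \<Rightarrow> 'a set"
  for m H K where
  base: "h \<in> H \<Longrightarrow> k \<in> K \<Longrightarrow> m h \<gamma> k \<in> gamma_prod m H K"
| add: "u \<in> gamma_prod m H K \<Longrightarrow> v \<in> gamma_prod m H K \<Longrightarrow> u + v \<in> gamma_prod m H K"

definition prime_h_ideal :: "('a::comm_monoid_add \<Rightarrow> 'g \<Rightarrow> 'a \<Rightarrow> 'a) \<Rightarrow> 'a set \<Rightarrow> bool" where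
  "prime_h_ideal m I \<longleftrightarrow> h_ideal m I \<and> I \<noteq> UNIV \<and>
     (\<forall>H K. h_ideal m H \<longrightarrow> h_ideal m K \<longrightarrow> gamma_prod m H K \<subseteq> I \<longrightarrow> H \<subseteq> I \<or> K \<subseteq> I)"

definition char_fun :: "'a set \<Rightarrow> 'a \<Rightarrow> real" where
  "char_fun I = indicator I"

text \<open>\<langle>x,\<mu>\<rangle>(y) = inf over s, \<alpha>, \<gamma> of \<mu>(x\<alpha>s\<gamma>y).\<close>
definition fuzzy_res :: "('a \<Rightarrow> 'g \<Rightarrow> 'a \<Rightarrow> 'a) \<Rightarrow> 'a \<Rightarrow> ('a \<Rightarrow> real) \<Rightarrow> 'a \<Rightarrow> real" where
  "fuzzy_res m x \<mu> y = (INF p \<in> (UNIV :: ('a \<times> 'g \<times> 'g) set).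
       \<mu> (m (m x (fst (snd p)) (fst p)) (snd (snd p)) y))"

end

theory Submission
  imports Defs
begin

lemma hI_basic:
  assumes "h_ideal m I"
  shows "0 \<in> I \<Longrightarrow> True" and "a \<in> I \<Longrightarrow> b \<in> I \<Longrightarrow> a + b \<in> I"
    and "a \<in> I \<Longrightarrow> m s \<gamma> a \<in> I" and "a \<in> I \<Longrightarrow> m a \<gamma> s \<in> I"
    and "x + a + z = b + z \<Longrightarrow> a \<in> I \<Longrightarrow> b \<in> I \<Longrightarrow> x \<in> I"
  using assms unfolding h_ideal_def gideal_def by blast+

lemma gh_dl: "gamma_hemiring m \<Longrightarrow> m a \<alpha> (b + c) = m a \<alpha> b + m a \<alpha> c"
  unfolding gamma_hemiring_def by metis
lemma gh_dr: "gamma_hemiring m \<Longrightarrow> m (a + b) \<alpha> c = m a \<alpha> c + m b \<alpha> c"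
  unfolding gamma_hemiring_def by metis
lemma gh_as: "gamma_hemiring m \<Longrightarrow> m (m a \<alpha> b) \<beta> c = m a \<alpha> (m b \<beta> c)"
  unfolding gamma_hemiring_def by metis
lemma gh_z1: "gamma_hemiring m \<Longrightarrow> m a b 0 = 0"
  unfolding gamma_hemiring_def by metis
lemma gh_z2: "gamma_hemiring m \<Longrightarrow> m 0 b a = 0"
  unfolding gamma_hemiring_def by metis

lemma zero_in:
  assumes "gamma_hemiring m" "h_ideal m I" shows "0 \<in> I"
proof -
  obtain a where "a \<in> I" using assms(2) unfolding h_ideal_def gideal_def by blast
  then have "m 0 \<gamma> a \<in> I" using hI_basic(3)[OF assms(2)] by blast
  thus ?thesis using assms(1) unfolding gamma_hemiring_def by simp
qed

lemma univ_h: "h_ideal m UNIV"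
  unfolding h_ideal_def gideal_def by auto

lemma cancel_L:
  assumes H: "gamma_hemiring m" and P: "prime_h_ideal m I"
    and k: "\<forall>s \<gamma>. m s \<gamma> k \<in> I"
  shows "k \<in> I"
proof -
  have hI: "h_ideal m I" using P unfolding prime_h_ideal_def by blast
  note z1 = gh_z1[OF H] and z2 = gh_z2[OF H] and dl = gh_dl[OF H] and dr = gh_dr[OF H] and as = gh_as[OF H]
  define K where "K = {k. \<forall>s \<gamma>. m s \<gamma> k \<in> I}"
  have hK: "h_ideal m K"
    unfolding h_ideal_def gideal_def
  proof (intro conjI allI ballI impI)
    have "(0::'a) \<in> K" using zero_in[OF H hI] z1 z2 unfolding K_def by simp
    thus "K \<noteq> {}" by blast
  next
    fix a b assume "a \<in> K" "b \<in> K"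
    thus "a + b \<in> K" unfolding K_def by (simp add: dl dr hI_basic(2)[OF hI])
  next
    fix s a \<gamma> assume "a \<in> K"
    thus "m s \<gamma> a \<in> K" unfolding K_def by (simp flip: as)
    show "m a \<gamma> s \<in> K" using \<open>a \<in> K\<close> unfolding K_def by (simp flip: as add: hI_basic(4)[OF hI])
  next
    fix x z a b assume a: "a \<in> K" and b: "b \<in> K" and e: "x + a + z = b + z"
    show "x \<in> K" unfolding K_def mem_Collect_eq
    proof (intro allI)
      fix s \<gamma>
      have "m s \<gamma> x + m s \<gamma> a + m s \<gamma> z = m s \<gamma> b + m s \<gamma> z"
        using arg_cong[OF e, of "m s \<gamma>"] dl dr by simp
      thus "m s \<gamma> x \<in> I" using a b hI_basic(5)[OF hI] unfolding K_def by blast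
    qed
  qed
  have "gamma_prod m UNIV K \<subseteq> I"
  proof
    fix u assume "u \<in> gamma_prod m UNIV K"
    thus "u \<in> I" by induct (auto simp: K_def hI_basic(2)[OF hI])
  qed
  hence "UNIV \<subseteq> I \<or> K \<subseteq> I" using P hK univ_h unfolding prime_h_ideal_def by blast
  thus ?thesis using P k unfolding prime_h_ideal_def K_def by blast
qed

lemma cancel_R:
  assumes H: "gamma_hemiring m" and P: "prime_h_ideal m I"
    and k: "\<forall>s \<gamma>. m k \<gamma> s \<in> I"
  shows "k \<in> I"
proof -
  have hI: "h_ideal m I" using P unfolding prime_h_ideal_def by blast
  note z1 = gh_z1[OF H] and z2 = gh_z2[OF H] and dl = gh_dl[OF H] and dr = gh_dr[OF H] and as = gh_as[OF H]
  define K where "K = {k. \<forall>s \<gamma>. m k \<gamma> s \<in> I}"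
  have hK: "h_ideal m K"
    unfolding h_ideal_def gideal_def
  proof (intro conjI allI ballI impI)
    have "(0::'a) \<in> K" using zero_in[OF H hI] z1 z2 unfolding K_def by simp
    thus "K \<noteq> {}" by blast
  next
    fix a b assume "a \<in> K" "b \<in> K"
    thus "a + b \<in> K" unfolding K_def by (simp add: dl dr hI_basic(2)[OF hI])
  next
    fix s a \<gamma> assume "a \<in> K"
    show "m a \<gamma> s \<in> K" using \<open>a \<in> K\<close> unfolding K_def by (simp add: as)
    show "m s \<gamma> a \<in> K" using \<open>a \<in> K\<close> unfolding K_def by (simp add: as hI_basic(3)[OF hI])
  next
    fix x z a b assume a: "a \<in> K" and b: "b \<in> K" and e: "x + a + z = b + z"
    show "x \<in> K" unfolding K_def mem_Collect_eq
    proof (intro allI)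
      fix s \<gamma>
      have "m x \<gamma> s + m a \<gamma> s + m z \<gamma> s = m b \<gamma> s + m z \<gamma> s"
        using arg_cong[OF e, of "\<lambda>u. m u \<gamma> s"] dl dr by simp
      thus "m x \<gamma> s \<in> I" using a b hI_basic(5)[OF hI] unfolding K_def by blast
    qed
  qed
  have "gamma_prod m K UNIV \<subseteq> I"
  proof
    fix u assume "u \<in> gamma_prod m K UNIV"
    thus "u \<in> I" by induct (auto simp: K_def hI_basic(2)[OF hI])
  qed
  hence "K \<subseteq> I \<or> UNIV \<subseteq> I" using P hK univ_h unfolding prime_h_ideal_def by blast
  thus ?thesis using P k unfolding prime_h_ideal_def K_def by blast
qed

lemma key:
  assumes H: "gamma_hemiring m" and P: "prime_h_ideal m I"
    and all: "\<forall>\<alpha> s \<gamma>. m (m x \<alpha> s) \<gamma> y \<in> I" and x: "x \<notin> I"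
  shows "y \<in> I"
proof -
  have hI: "h_ideal m I" using P unfolding prime_h_ideal_def by blast
  note z1 = gh_z1[OF H] and z2 = gh_z2[OF H] and dl = gh_dl[OF H] and dr = gh_dr[OF H] and as = gh_as[OF H]
  define M where "M = {k. \<forall>\<alpha> s \<gamma>. m (m x \<alpha> s) \<gamma> k \<in> I}"
  have hM: "h_ideal m M"
    unfolding h_ideal_def gideal_def
  proof (intro conjI allI ballI impI)
    have "(0::'a) \<in> M" using zero_in[OF H hI] z1 z2 unfolding M_def by simp
    thus "M \<noteq> {}" by blast
  next
    fix a b assume "a \<in> M" "b \<in> M"
    thus "a + b \<in> M" unfolding M_def by (simp add: dl dr hI_basic(2)[OF hI])
  next
    fix s a \<gamma> assume a: "a \<in> M"
    show "m s \<gamma> a \<in> M" unfolding M_def mem_Collect_eq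
    proof (intro allI)
      fix \<alpha> t \<delta>
      have "m (m x \<alpha> t) \<delta> (m s \<gamma> a) = m (m x \<alpha> (m t \<delta> s)) \<gamma> a" by (simp add: as)
      thus "m (m x \<alpha> t) \<delta> (m s \<gamma> a) \<in> I" using a unfolding M_def by simp
    qed
    show "m a \<gamma> s \<in> M" using a unfolding M_def by (simp flip: as add: hI_basic(4)[OF hI])
  next
    fix z w a b assume a: "a \<in> M" and b: "b \<in> M" and e: "z + a + w = b + w"
    show "z \<in> M" unfolding M_def mem_Collect_eq
    proof (intro allI)
      fix \<alpha> s \<gamma>
      let ?c = "m x \<alpha> s"
      have "m ?c \<gamma> z + m ?c \<gamma> a + m ?c \<gamma> w = m ?c \<gamma> b + m ?c \<gamma> w"
        using arg_cong[OF e, of "m ?c \<gamma>"] dl dr by simp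
      thus "m ?c \<gamma> z \<in> I" using a b hI_basic(5)[OF hI] unfolding M_def by blast
    qed
  qed
  define Hs where "Hs = {h. \<forall>\<alpha> k. k \<in> M \<longrightarrow> m h \<alpha> k \<in> I}"
  have hH: "h_ideal m Hs"
    unfolding h_ideal_def gideal_def
  proof (intro conjI allI ballI impI)
    have "(0::'a) \<in> Hs" using zero_in[OF H hI] z1 z2 unfolding Hs_def by simp
    thus "Hs \<noteq> {}" by blast
  next
    fix a b assume "a \<in> Hs" "b \<in> Hs"
    thus "a + b \<in> Hs" unfolding Hs_def by (simp add: dl dr hI_basic(2)[OF hI])
  next
    fix s a \<gamma> assume a: "a \<in> Hs"
    show "m s \<gamma> a \<in> Hs" using a unfolding Hs_def by (simp add: as hI_basic(3)[OF hI])
    show "m a \<gamma> s \<in> Hs" unfolding Hs_def mem_Collect_eq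
    proof (intro allI impI)
      fix \<alpha> k assume k: "k \<in> M"
      have "m s \<alpha> k \<in> M" using hM k unfolding h_ideal_def gideal_def by blast
      hence "m a \<gamma> (m s \<alpha> k) \<in> I" using a unfolding Hs_def by blast
      thus "m (m a \<gamma> s) \<alpha> k \<in> I" by (simp add: as)
    qed
  next
    fix z w a b assume a: "a \<in> Hs" and b: "b \<in> Hs" and e: "z + a + w = b + w"
    show "z \<in> Hs" unfolding Hs_def mem_Collect_eq
    proof (intro allI impI)
      fix \<alpha> k assume k: "k \<in> M"
      have "m z \<alpha> k + m a \<alpha> k + m w \<alpha> k = m b \<alpha> k + m w \<alpha> k"
        using arg_cong[OF e, of "\<lambda>u. m u \<alpha> k"] dl dr by simp
      thus "m z \<alpha> k \<in> I" using a b k hI_basic(5)[OF hI] unfolding Hs_def by blast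
    qed
  qed
  have "gamma_prod m Hs M \<subseteq> I"
  proof
    fix u assume "u \<in> gamma_prod m Hs M"
    thus "u \<in> I" by induct (auto simp: Hs_def hI_basic(2)[OF hI])
  qed
  hence "Hs \<subseteq> I \<or> M \<subseteq> I" using P hH hM unfolding prime_h_ideal_def by blast
  moreover have "\<forall>\<alpha> s. m x \<alpha> s \<in> Hs" unfolding Hs_def M_def by blast
  moreover have "y \<in> M" using all unfolding M_def by blast
  ultimately show ?thesis using cancel_R[OF H P] x by blast
qed

theorem corollary3p23:
  fixes m :: "'a::comm_monoid_add \<Rightarrow> 'g::comm_monoid_add \<Rightarrow> 'a \<Rightarrow> 'a"
    and I :: "'a set" and x :: 'a
  assumes "gamma_hemiring m"
    and "prime_h_ideal m I"
    and "x \<notin> I"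
  shows "fuzzy_res m x (char_fun I) = char_fun I"
proof
  fix y
  have hI: "h_ideal m I" using assms(2) unfolding prime_h_ideal_def by blast
  let ?f = "\<lambda>p::('a \<times> 'g \<times> 'g). char_fun I (m (m x (fst (snd p)) (fst p)) (snd (snd p)) y)"
  have bdd: "bdd_below (range ?f)"
    by (rule bdd_belowI[where m=0]) (auto simp: char_fun_def)
  show "fuzzy_res m x (char_fun I) y = char_fun I y"
  proof (cases "y \<in> I")
    case True
    have "\<And>p. ?f p = 1" using True hI_basic(3)[OF hI] by (simp add: char_fun_def)
    thus ?thesis using True unfolding fuzzy_res_def by (simp add: char_fun_def)
  next
    case False
    then obtain \<alpha> s \<gamma> where n: "m (m x \<alpha> s) \<gamma> y \<notin> I" using key[OF assms(1,2) _ assms(3)] by blast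
    have "?f (s, \<alpha>, \<gamma>) = 0" using n by (simp add: char_fun_def)
    hence le: "(INF p. ?f p) \<le> 0" using cINF_lower[OF bdd, of "(s,\<alpha>,\<gamma>)"] by simp
    have ge: "0 \<le> (INF p. ?f p)" by (rule cINF_greatest) (auto simp: char_fun_def)
    show ?thesis using le ge False unfolding fuzzy_res_def by (simp add: char_fun_def)
  qed
qed

end
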